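(* Let $C \subset \mathbb{S}^{47}$ be a spherical $11$-design whose set of inner products $I(C)=\{\langle x,y\rangle : x,y\in C,\ x\neq y\}$ satisfies $I(C) \subset [-1,1)\setminus F'$, where $F'=\left(-\tfrac12,-\tfrac13\right)\cup\left(\tfrac13,\tfrac12\right)$. Then $|C| \geq 52\,416\,000$. If equality holds, then $C$ is distance invariant and its distance distribution is \[ A_{-1}=1,\quad A_{1/2}=A_{-1/2}=36\,848,\quad A_{1/3}=A_{-1/3}=1\,678\,887,\quad A_{1/6}=A_{-1/6}=12\,608\,784,\quad A_0=23\,766\,960 \] (with $A_t=0$ for all other $t$).
   Context: A spherical $\tau$-design is a finite set $C\subset\mathbb{S}^{n-1}$ such that $\int_{\mathbb{S}^{n-1}} p\, d\sigma_n = \frac{1}{|C|}\sum_{x\in C} p(x)$ for every polynomial $p$ in $n$ variables of degree at most $\tau$, where $\sigma_n$ is the normalized surface measure. For $x\in C$ and $t\in[-1,1)$, $A_t(x)=|\{y\in C: \langle x,y\rangle = t\}|$; $C$ is distance invariant if $A_t(x)$ does not depend on $x\in C$ for every $t$, and then one writes $A_t$. *)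

theory Defs
  imports "HOL-Analysis.Analysis"
begin

definition monomial_fun :: "('n::finite \<Rightarrow> nat) \<Rightarrow> real^'n \<Rightarrow> real" where
  "monomial_fun \<alpha> x = (\<Prod>i\<in>UNIV. (x $ i) ^ (\<alpha> i))"

definition poly_fun_deg_le :: "nat \<Rightarrow> (real^'n::finite \<Rightarrow> real) \<Rightarrow> bool" where
  "poly_fun_deg_le \<tau> p \<longleftrightarrow>
     (\<exists>S c. finite S \<and> (\<forall>\<alpha>\<in>S. (\<Sum>i\<in>UNIV. \<alpha> i) \<le> \<tau>) \<and>
            p = (\<lambda>x. \<Sum>\<alpha>\<in>S. c \<alpha> * monomial_fun \<alpha> x))"

text \<open>Integral against the normalized surface measure on the unit sphere, realised as
  the push-forward of normalized Lebesgue measure on the unit ball under radial projection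
  (cone-measure definition of the normalized surface measure).\<close>
definition sphere_integral :: "(real^'n::finite \<Rightarrow> real) \<Rightarrow> real" where
  "sphere_integral p =
     (LINT x : ball 0 1 | lborel. p (x /\<^sub>R norm x)) / measure lborel (ball (0::real^'n) 1)"

definition spherical_design :: "nat \<Rightarrow> (real^'n::finite) set \<Rightarrow> bool" where
  "spherical_design \<tau> C \<longleftrightarrow>
     finite C \<and> C \<noteq> {} \<and> C \<subseteq> sphere 0 1 \<and>
     (\<forall>p. poly_fun_deg_le \<tau> p \<longrightarrow> sphere_integral p = (\<Sum>x\<in>C. p x) / real (card C))"

definition inner_products :: "(real^'n::finite) set \<Rightarrow> real set" where
  "inner_products C = {x \<bullet> y | x y. x \<in> C \<and> y \<in> C \<and> x \<noteq> y}"

definition dist_count :: "(real^'n::finite) set \<Rightarrow> real \<Rightarrow> real^'n \<Rightarrow> nat" where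
  "dist_count C t x = card {y \<in> C. x \<bullet> y = t}"

definition distance_invariant :: "(real^'n::finite) set \<Rightarrow> bool" where
  "distance_invariant C \<longleftrightarrow>
     (\<forall>t\<in>{-1..<1}. \<forall>x\<in>C. \<forall>y\<in>C. dist_count C t x = dist_count C t y)"

end

theory Submission
  imports Defs
begin

lemma dA: "((\<lambda>\<theta>. cos \<theta> * p + sin \<theta> * q) has_real_derivative (cos \<theta> * q - sin \<theta> * p)) (at \<theta>)"
  by (auto intro!: derivative_eq_intros simp: algebra_simps)
lemma dB: "((\<lambda>\<theta>. cos \<theta> * q - sin \<theta> * p) has_real_derivative (- sin \<theta> * q - cos \<theta> * p)) (at \<theta>)"
  by (auto intro!: derivative_eq_intros simp: algebra_simps)
lemma d1: "((\<lambda>\<theta>. (cos \<theta> * p + sin \<theta> * q)^(Suc n)) has_real_derivative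
   real (Suc n) * (cos \<theta> * p + sin \<theta> * q)^n * (cos \<theta> * q - sin \<theta> * p)) (at \<theta>)"
  using DERIV_power_Suc[OF dA[of p q \<theta>], of n] by (simp add: algebra_simps)
lemma d2: "((\<lambda>\<theta>. real (Suc (Suc m)) * (cos \<theta> * p + sin \<theta> * q)^(Suc m) * (cos \<theta> * q - sin \<theta> * p)) has_real_derivative
   real (Suc (Suc m)) * (real (Suc m) * p^m * q * q - p ^ Suc m * p)) (at 0)"
proof -
  have "((\<lambda>\<theta>. (cos \<theta> * p + sin \<theta> * q)^(Suc m) * (cos \<theta> * q - sin \<theta> * p)) has_real_derivative
     (cos 0 * p + sin 0 * q)^(Suc m) * (- sin 0 * q - cos 0 * p) +
     (real (Suc m) * (cos 0 * p + sin 0 * q)^m * (cos 0 * q - sin 0 * p)) * (cos 0 * q - sin 0 * p)) (at 0)"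
    by (rule DERIV_mult'[OF d1 dB])
  then have "((\<lambda>\<theta>. (cos \<theta> * p + sin \<theta> * q)^(Suc m) * (cos \<theta> * q - sin \<theta> * p)) has_real_derivative
     (real (Suc m) * p^m * q * q - p ^ Suc m * p)) (at 0)"
    by (simp add: algebra_simps)
  from DERIV_cmult[OF this, of "real (Suc (Suc m))"] show ?thesis by (simp add: mult.assoc)
qed
lemma deriv_zero_const:
  fixes g :: "real \<Rightarrow> real"
  assumes "\<And>\<theta>. g \<theta> = c" "(g has_real_derivative D) (at \<theta>)"
  shows "D = 0"
proof -
  have "g = (\<lambda>_. c)" using assms(1) by auto
  then show ?thesis using assms(2) DERIV_const DERIV_unique by metis
qed


lemma pfd_intro:
  fixes m :: "'i \<Rightarrow> ('n::finite \<Rightarrow> nat)"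
  assumes "finite I" "\<And>i. i \<in> I \<Longrightarrow> (\<Sum>j\<in>UNIV. m i j) \<le> \<tau>"
  shows "poly_fun_deg_le \<tau> (\<lambda>x. \<Sum>i\<in>I. c i * monomial_fun (m i) x)"
proof -
  define c' where "c' \<alpha> = (\<Sum>i\<in>{i\<in>I. m i = \<alpha>}. c i)" for \<alpha>
  have "(\<lambda>x. \<Sum>i\<in>I. c i * monomial_fun (m i) x) = (\<lambda>x. \<Sum>\<alpha>\<in>m ` I. c' \<alpha> * monomial_fun \<alpha> x)"
  proof
    fix x
    have "(\<Sum>i\<in>I. c i * monomial_fun (m i) x) = (\<Sum>\<alpha>\<in>m ` I. \<Sum>i\<in>{i\<in>I. m i = \<alpha>}. c i * monomial_fun (m i) x)"
      using sum.image_gen[OF assms(1), of "\<lambda>i. c i * monomial_fun (m i) x" m] by simp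
    also have "\<dots> = (\<Sum>\<alpha>\<in>m ` I. c' \<alpha> * monomial_fun \<alpha> x)"
      by (auto simp: c'_def sum_distrib_right intro!: sum.cong)
    finally show "(\<Sum>i\<in>I. c i * monomial_fun (m i) x) = (\<Sum>\<alpha>\<in>m ` I. c' \<alpha> * monomial_fun \<alpha> x)" .
  qed
  then show ?thesis unfolding poly_fun_deg_le_def using assms by blast
qed

lemma pfd_elim:
  assumes "poly_fun_deg_le \<tau> p"
  obtains S c where "finite S" "\<And>\<alpha>. \<alpha>\<in>S \<Longrightarrow> (\<Sum>i\<in>UNIV. \<alpha> i) \<le> \<tau>"
    "p = (\<lambda>x. \<Sum>\<alpha>\<in>S. c \<alpha> * monomial_fun \<alpha> x)"
  using assms unfolding poly_fun_deg_le_def by blast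

lemma pfd_mono: "poly_fun_deg_le a p \<Longrightarrow> a \<le> b \<Longrightarrow> poly_fun_deg_le b p"
  unfolding poly_fun_deg_le_def by (metis (no_types, lifting) order_trans)


lemma pfd_const: "poly_fun_deg_le \<tau> (\<lambda>x. a)"
proof -
  have "poly_fun_deg_le \<tau> (\<lambda>x. \<Sum>i\<in>{()}. (\<lambda>_. a) i * monomial_fun ((\<lambda>_. (\<lambda>_. 0)) i) x)"
    by (rule pfd_intro) auto
  then show ?thesis by (simp add: monomial_fun_def)
qed

lemma pfd_coord: "poly_fun_deg_le 1 (\<lambda>x::real^'n::finite. x $ k)"
proof -
  have "poly_fun_deg_le 1 (\<lambda>x. \<Sum>i\<in>{()}. (\<lambda>_. 1) i * monomial_fun ((\<lambda>_. (\<lambda>j. if j = k then 1 else 0)) i) (x::real^'n))"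
    by (rule pfd_intro) auto
  moreover have "monomial_fun (\<lambda>j. if j = k then 1 else 0) x = x $ k" for x :: "real^'n"
  proof -
    have eq: "(\<lambda>j. x$j ^ (if j=k then 1 else 0)) = (\<lambda>j. if j=k then x$j else 1)" by auto
    show ?thesis unfolding monomial_fun_def eq by simp
  qed
  ultimately show ?thesis by simp
qed

lemma pfd_add:
  assumes "poly_fun_deg_le \<tau> p" "poly_fun_deg_le \<tau> q"
  shows "poly_fun_deg_le \<tau> (\<lambda>x. p x + q x)"
proof -
  obtain S c where S: "finite S" "\<And>\<alpha>. \<alpha>\<in>S \<Longrightarrow> (\<Sum>i\<in>UNIV. \<alpha> i) \<le> \<tau>"
    "p = (\<lambda>x. \<Sum>\<alpha>\<in>S. c \<alpha> * monomial_fun \<alpha> x)" using pfd_elim[OF assms(1)] by blast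
  obtain T d where T: "finite T" "\<And>\<alpha>. \<alpha>\<in>T \<Longrightarrow> (\<Sum>i\<in>UNIV. \<alpha> i) \<le> \<tau>"
    "q = (\<lambda>x. \<Sum>\<alpha>\<in>T. d \<alpha> * monomial_fun \<alpha> x)" using pfd_elim[OF assms(2)] by blast
  define e where "e = case_sum c d"
  define m where "m = case_sum (\<lambda>\<alpha>. \<alpha>) (\<lambda>\<alpha>::'a\<Rightarrow>nat. \<alpha>)"
  have "poly_fun_deg_le \<tau> (\<lambda>x. \<Sum>i\<in>S <+> T. e i * monomial_fun (m i) x)"
    by (rule pfd_intro) (use S T in \<open>auto simp: m_def\<close>)
  moreover have "(\<Sum>i\<in>S <+> T. e i * monomial_fun (m i) x) = p x + q x" for x
    using S T by (simp add: sum.Plus e_def m_def)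
  ultimately show ?thesis by simp
qed

lemma mono_add: "monomial_fun (\<lambda>j. a j + b j) x = monomial_fun a x * monomial_fun b x"
  by (simp add: monomial_fun_def power_add prod.distrib)

lemma pfd_mult:
  assumes "poly_fun_deg_le a p" "poly_fun_deg_le b q"
  shows "poly_fun_deg_le (a + b) (\<lambda>x. p x * q x)"
proof -
  obtain S c where S: "finite S" "\<And>\<alpha>. \<alpha>\<in>S \<Longrightarrow> (\<Sum>i\<in>UNIV. \<alpha> i) \<le> a"
    "p = (\<lambda>x. \<Sum>\<alpha>\<in>S. c \<alpha> * monomial_fun \<alpha> x)" using pfd_elim[OF assms(1)] by blast
  obtain T d where T: "finite T" "\<And>\<alpha>. \<alpha>\<in>T \<Longrightarrow> (\<Sum>i\<in>UNIV. \<alpha> i) \<le> b"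
    "q = (\<lambda>x. \<Sum>\<alpha>\<in>T. d \<alpha> * monomial_fun \<alpha> x)" using pfd_elim[OF assms(2)] by blast
  define e where "e = (\<lambda>(\<alpha>,\<beta>). c \<alpha> * d \<beta>)"
  define m where "m = (\<lambda>(\<alpha>::'a\<Rightarrow>nat,\<beta>::'a\<Rightarrow>nat). (\<lambda>j. \<alpha> j + \<beta> j))"
  have "poly_fun_deg_le (a+b) (\<lambda>x. \<Sum>i\<in>S \<times> T. e i * monomial_fun (m i) x)"
  proof (rule pfd_intro)
    show "finite (S \<times> T)" using S T by simp
    fix i assume "i \<in> S \<times> T"
    then obtain \<alpha> \<beta> where i: "i = (\<alpha>,\<beta>)" "\<alpha>\<in>S" "\<beta>\<in>T" by auto
    then show "(\<Sum>j\<in>UNIV. m i j) \<le> a + b"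
      using S(2)[of \<alpha>] T(2)[of \<beta>] by (simp add: m_def sum.distrib)
  qed
  moreover have "(\<Sum>i\<in>S \<times> T. e i * monomial_fun (m i) x) = p x * q x" for x
    using S T by (simp add: sum_product sum.cartesian_product e_def m_def mono_add mult_ac split_def)
  ultimately show ?thesis by simp
qed

lemma pfd_power:
  assumes "poly_fun_deg_le a p"
  shows "poly_fun_deg_le (k * a) (\<lambda>x. p x ^ k)"
proof (induction k)
  case 0 then show ?case using pfd_const[of 0 1] by simp
next
  case (Suc k)
  from pfd_mult[OF assms Suc] show ?case by simp
qed

lemma pfd_sum:
  assumes "finite A" "\<And>i. i \<in> A \<Longrightarrow> poly_fun_deg_le \<tau> (f i)"
  shows "poly_fun_deg_le \<tau> (\<lambda>x. \<Sum>i\<in>A. f i x)"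
  using assms
proof (induction A rule: finite_induct)
  case empty then show ?case using pfd_const[of \<tau> 0] by simp
next
  case (insert a A)
  then show ?case using pfd_add[of \<tau> "f a" "\<lambda>x. \<Sum>i\<in>A. f i x"] by simp
qed

lemma pfd_inner: "poly_fun_deg_le 1 (\<lambda>y::real^'n. u \<bullet> y)"
proof -
  have "poly_fun_deg_le (0+1) (\<lambda>y::real^'n. u $ i * y $ i)" for i
    by (rule pfd_mult[OF pfd_const pfd_coord])
  then have "poly_fun_deg_le 1 (\<lambda>y::real^'n. \<Sum>i\<in>UNIV. u $ i * y $ i)"
    by (intro pfd_sum) auto
  then show ?thesis by (simp add: inner_vec_def)
qed

lemma pfd_inner_pow: "poly_fun_deg_le k (\<lambda>y::real^'n. (u \<bullet> y) ^ k)"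
  using pfd_power[OF pfd_inner, of k u] by simp



lemma prod_Basis_cart: "(\<Prod>b\<in>(Basis::(real^'n) set). f b) = (\<Prod>i\<in>UNIV. f (axis i 1))"
  by (simp add: Basis_vec_def axis_eq_axis prod.UNION_disjoint)

lemma lin_meas:
  fixes Q :: "'a::euclidean_space \<Rightarrow> 'b::euclidean_space"
  assumes "linear Q" shows "Q \<in> borel_measurable borel"
  by (simp add: assms borel_measurable_continuous_onI linear_continuous_on linear_linear)

lemma lborel_orth48:
  fixes Q :: "real^48 \<Rightarrow> real^48"
  assumes Q: "orthogonal_transformation Q"
  shows "distr lborel borel Q = lborel"
proof -
  have lin: "linear Q" using Q orthogonal_transformation_linear by blast
  have meas: "Q \<in> borel_measurable borel" using lin lin_meas by blast
  have bij: "bij Q" using Q orthogonal_transformation_bij by blast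
  have Qi: "orthogonal_transformation (inv Q)" using Q orthogonal_transformation_inv by blast
  show ?thesis
  proof (rule lborel_eqI[symmetric])
    fix l u :: "real^48" assume le: "\<And>b. b\<in>Basis \<Longrightarrow> l\<bullet>b \<le> u\<bullet>b"
    have "emeasure (distr lborel borel Q) (box l u) = emeasure lborel (Q -` box l u)"
      by (simp add: emeasure_distr meas)
    also have "Q -` box l u = inv Q ` box l u"
      using bij by (simp add: bij_vimage_eq_inv_image)
    also have "emeasure lborel (inv Q ` box l u) = emeasure lborel (box l u)"
    proof -
      have m: "measure lebesgue (inv Q ` box l u) = measure lebesgue (box l u)"
        by (rule measure_orthogonal_image[OF Qi]) simp
      have b1: "inv Q ` box l u \<in> sets borel"
        using bij meas by (metis bij_vimage_eq_inv_image borel_open measurable_sets_borel open_box)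
      have b2: "box l u \<in> sets borel" by simp
      have "measure lborel (inv Q ` box l u) = measure lborel (box l u)"
        using m b1 b2 by simp
      moreover have "bounded (inv Q ` box l u)"
        using Qi by (simp add: bounded_linear_image orthogonal_transformation_linear linear_linear)
      moreover have "emeasure lborel (inv Q ` box l u) = ennreal (measure lborel (inv Q ` box l u))"
        using emeasure_bounded_finite[OF calculation(2)] by (simp add: emeasure_eq_ennreal_measure)
      moreover have "emeasure lborel (box l u) = ennreal (measure lborel (box l u))"
        using emeasure_bounded_finite[OF bounded_box, of l u] emeasure_eq_ennreal_measure[of lborel "box l u"] by simp
      ultimately show ?thesis by simp
    qed
    finally show "emeasure (distr lborel borel Q) (box l u) = (\<Prod>b\<in>Basis. (u - l) \<bullet> b)"
      using le by simp
  qed simp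
qed

lemma lborel_orth:
  fixes Q :: "real^'n \<Rightarrow> real^'n"
  assumes card: "CARD('n) = 48" and Q: "orthogonal_transformation Q"
  shows "distr lborel borel Q = lborel"
proof -
  have "card (UNIV::48 set) = card (UNIV::'n set)" using card by simp
  then obtain \<sigma> :: "48 \<Rightarrow> 'n" where bs: "bij_betw \<sigma> UNIV UNIV"
    using finite_same_card_bij[of "UNIV::48 set" "UNIV::'n set"] by auto
  then have bij: "bij \<sigma>" by simp
  define \<Phi> :: "real^'n \<Rightarrow> real^48" where "\<Phi> x = (\<chi> j. x $ \<sigma> j)" for x
  define \<Psi> :: "real^48 \<Rightarrow> real^'n" where "\<Psi> y = (\<chi> i. y $ inv \<sigma> i)" for y
  have PsiPhi: "\<Psi> (\<Phi> x) = x" for x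
    using bij by (simp add: \<Phi>_def \<Psi>_def vec_eq_iff bij_is_surj surj_f_inv_f bij_is_inj inv_f_f)
  have PhiPsi: "\<Phi> (\<Psi> y) = y" for y
    using bij by (simp add: \<Phi>_def \<Psi>_def vec_eq_iff bij_is_surj surj_f_inv_f bij_is_inj inv_f_f)
  have linPhi: "linear \<Phi>"
    by (rule linearI) (simp_all add: \<Phi>_def vec_eq_iff)
  have linPsi: "linear \<Psi>"
    by (rule linearI) (simp_all add: \<Psi>_def vec_eq_iff)
  have mPhi[measurable]: "\<Phi> \<in> borel_measurable borel" using linPhi lin_meas by blast
  have mPsi[measurable]: "\<Psi> \<in> borel_measurable borel" using linPsi lin_meas by blast
  have innPhi: "\<Phi> x \<bullet> \<Phi> y = x \<bullet> y" for x y
  proof -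
    have "\<Phi> x \<bullet> \<Phi> y = (\<Sum>j\<in>UNIV. x $ \<sigma> j * y $ \<sigma> j)"
      by (simp add: \<Phi>_def inner_vec_def)
    also have "\<dots> = (\<Sum>i\<in>UNIV. x $ i * y $ i)"
      using sum.reindex_bij_betw[OF bs, of "\<lambda>i. x $ i * y $ i"] by simp
    finally show ?thesis by (simp add: inner_vec_def)
  qed
  have D1: "distr lborel borel \<Phi> = (lborel :: (real^48) measure)"
  proof (rule lborel_eqI[symmetric])
    fix l u :: "real^48" assume le: "\<And>b. b\<in>Basis \<Longrightarrow> l\<bullet>b \<le> u\<bullet>b"
    have le': "l $ j \<le> u $ j" for j
      using le[of "axis j 1"] by (auto simp: Basis_vec_def cart_eq_inner_axis)
    have pre: "\<Phi> -` box l u = box (\<Psi> l) (\<Psi> u)"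
    proof -
      have allc: "(\<forall>j. P j (\<sigma> j)) \<longleftrightarrow> (\<forall>i. P (inv \<sigma> i) i)" for P :: "48 \<Rightarrow> 'n \<Rightarrow> bool"
        using bij by (metis bij_is_surj bij_is_inj surj_f_inv_f inv_f_f)
      show ?thesis
        using allc[of "\<lambda>j i. l $ j < x $ i \<and> x $ i < u $ j" for x]
        by (auto simp: mem_box_cart \<Phi>_def \<Psi>_def)
    qed
    have le2: "\<And>b. b\<in>Basis \<Longrightarrow> \<Psi> l \<bullet> b \<le> \<Psi> u \<bullet> b"
      using le' by (auto simp: Basis_vec_def inner_axis \<Psi>_def)
    have "emeasure (distr lborel borel \<Phi>) (box l u) = emeasure lborel (box (\<Psi> l) (\<Psi> u))"
      by (simp add: emeasure_distr pre)
    also have "\<dots> = (\<Prod>b\<in>Basis. (\<Psi> u - \<Psi> l) \<bullet> b)"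
      using le2 by simp
    also have "\<dots> = (\<Prod>i\<in>UNIV. u $ inv \<sigma> i - l $ inv \<sigma> i)"
      by (simp add: prod_Basis_cart cart_eq_inner_axis[symmetric] \<Psi>_def)
    also have "\<dots> = (\<Prod>j\<in>UNIV. u $ j - l $ j)"
      using prod.reindex_bij_betw[OF bij_betw_inv_into[OF bs], of "\<lambda>j. u $ j - l $ j"] by simp
    also have "\<dots> = (\<Prod>b\<in>Basis. (u - l) \<bullet> b)"
      by (simp add: prod_Basis_cart cart_eq_inner_axis[symmetric])
    finally show "emeasure (distr lborel borel \<Phi>) (box l u) = (\<Prod>b\<in>Basis. (u - l) \<bullet> b)" .
  qed simp
  have D2: "distr lborel borel \<Psi> = (lborel :: (real^'n) measure)"
  proof -
    have "distr lborel borel \<Psi> = distr (distr lborel borel \<Phi>) borel \<Psi>" by (simp add: D1)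
    also have "\<dots> = distr lborel borel (\<Psi> \<circ> \<Phi>)" by (simp add: distr_distr)
    also have "\<Psi> \<circ> \<Phi> = (\<lambda>x. x)" by (simp add: PsiPhi fun_eq_iff)
    finally show ?thesis by (simp add: distr_id2)
  qed
  define Q' where "Q' = \<Phi> \<circ> Q \<circ> \<Psi>"
  have linQ: "linear Q" using Q orthogonal_transformation_linear by blast
  have mQ[measurable]: "Q \<in> borel_measurable borel" using linQ lin_meas by blast
  have Q': "orthogonal_transformation Q'"
    unfolding orthogonal_transformation_def
  proof
    show "linear Q'" unfolding Q'_def using linPhi linPsi linQ by (simp add: linear_compose)
    show "\<forall>v w. Q' v \<bullet> Q' w = v \<bullet> w"
    proof (intro allI)
      fix v w
      have "Q' v \<bullet> Q' w = Q (\<Psi> v) \<bullet> Q (\<Psi> w)" by (simp add: Q'_def innPhi)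
      also have "\<dots> = \<Psi> v \<bullet> \<Psi> w" using Q by (simp add: orthogonal_transformation_def)
      also have "\<dots> = v \<bullet> w" by (metis innPhi PhiPsi)
      finally show "Q' v \<bullet> Q' w = v \<bullet> w" .
    qed
  qed
  have "distr lborel borel Q = distr (distr lborel borel \<Psi>) borel Q" by (simp add: D2)
  also have "\<dots> = distr lborel borel (Q \<circ> \<Psi>)" by (simp add: distr_distr)
  also have "Q \<circ> \<Psi> = \<Psi> \<circ> Q'" by (simp add: Q'_def fun_eq_iff PsiPhi)
  also have "distr lborel borel (\<Psi> \<circ> Q') = distr (distr lborel borel Q') borel \<Psi>"
    using Q' by (simp add: distr_distr lin_meas orthogonal_transformation_linear)
  also have "\<dots> = lborel" using lborel_orth48[OF Q'] D2 by simp
  finally show ?thesis .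
qed

lemma sphere_integral_orth:
  fixes Q :: "real^'n \<Rightarrow> real^'n" and p :: "real^'n \<Rightarrow> real"
  assumes card: "CARD('n) = 48" and Q: "orthogonal_transformation Q" and p: "continuous_on UNIV p"
  shows "sphere_integral (\<lambda>x. p (Q x)) = sphere_integral p"
proof -
  define g where "g z = indicator (ball (0::real^'n) 1) z *\<^sub>R p (z /\<^sub>R norm z)" for z
  have pm[measurable]: "p \<in> borel_measurable borel"
    using p by (simp add: borel_measurable_continuous_onI)
  have gm[measurable]: "g \<in> borel_measurable borel"
  proof -
    have "(\<lambda>x. p (x /\<^sub>R norm x)) \<in> borel_measurable borel"
      using measurable_compose[OF _ pm, of "\<lambda>x. x /\<^sub>R norm x" borel] by simp
    moreover have "ball (0::real^'n) 1 \<in> sets borel" by simp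
    ultimately show ?thesis unfolding g_def
      by (intro borel_measurable_scaleR borel_measurable_indicator) auto
  qed
  have linQ: "linear Q" using Q orthogonal_transformation_linear by blast
  have mQ[measurable]: "Q \<in> borel_measurable borel" using linQ lin_meas by blast
  have nQ: "norm (Q x) = norm x" for x using Q orthogonal_transformation_norm by blast
  have gQ: "g (Q x) = indicator (ball (0::real^'n) 1) x *\<^sub>R p (Q (x /\<^sub>R norm x))" for x
    using Q by (simp add: g_def nQ orthogonal_transformation_scaleR indicator_def)
  have "(LINT x : ball 0 1 | lborel. p (Q (x /\<^sub>R norm x))) = integral\<^sup>L lborel (\<lambda>x. g (Q x))"
    by (simp add: set_lebesgue_integral_def gQ)
  also have "\<dots> = integral\<^sup>L (distr lborel borel Q) g"
    by (rule integral_distr[symmetric]) simp_all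
  also have "\<dots> = integral\<^sup>L lborel g" using lborel_orth[OF card Q] by simp
  also have "\<dots> = (LINT x : ball 0 1 | lborel. p (x /\<^sub>R norm x))"
    by (simp add: set_lebesgue_integral_def g_def[abs_def])
  finally show ?thesis by (simp add: sphere_integral_def)
qed



lemma design_sum:
  assumes "spherical_design 11 C" "poly_fun_deg_le 11 p"
  shows "sphere_integral p = (\<Sum>x\<in>C. p x) / real (card C)"
  using assms unfolding spherical_design_def by blast

lemma T_inv:
  fixes C :: "(real^'n::finite) set"
  assumes card: "CARD('n) = 48" and des: "spherical_design 11 C"
    and nuv: "norm u = norm v" and k: "k \<le> 11"
  shows "(\<Sum>y\<in>C. (u \<bullet> y)^k) = (\<Sum>y\<in>C. (v \<bullet> y)^k)"
proof -
  obtain R where R: "orthogonal_transformation R" "R u = v"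
    using orthogonal_transformation_exists[OF nuv] by blast
  define Q where "Q = inv R"
  have Q: "orthogonal_transformation Q" unfolding Q_def using R(1) orthogonal_transformation_inv by blast
  have RQ: "R (Q y) = y" for y
    unfolding Q_def using R(1) orthogonal_transformation_surj surj_f_inv_f by metis
  have uQ: "u \<bullet> Q y = v \<bullet> y" for y
    using R RQ unfolding orthogonal_transformation_def by metis
  have cont: "continuous_on UNIV (\<lambda>y::real^'n. (u \<bullet> y)^k)"
    by (intro continuous_intros)
  have "sphere_integral (\<lambda>y. (u \<bullet> Q y)^k) = sphere_integral (\<lambda>y. (u \<bullet> y)^k)"
    by (rule sphere_integral_orth[OF card Q cont])
  then have "sphere_integral (\<lambda>y. (v \<bullet> y)^k) = sphere_integral (\<lambda>y. (u \<bullet> y)^k)"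
    by (simp add: uQ)
  moreover have "poly_fun_deg_le 11 (\<lambda>y::real^'n. (w \<bullet> y)^k)" for w
    using pfd_mono[OF pfd_inner_pow k] .
  ultimately have "(\<Sum>y\<in>C. (v \<bullet> y)^k) / real (card C) = (\<Sum>y\<in>C. (u \<bullet> y)^k) / real (card C)"
    using design_sum[OF des] by metis
  moreover have "card C > 0" using des unfolding spherical_design_def by (simp add: card_gt_0_iff)
  ultimately show ?thesis by (simp add: field_simps)
qed

lemma axis_inner: "axis a 1 \<bullet> y = y $ a"
  by (simp add: inner_commute cart_eq_inner_axis)

lemma moments_rec:
  fixes C :: "(real^'n::finite) set"
  assumes card: "CARD('n) = 48" and des: "spherical_design 11 C" and m: "m + 2 \<le> 11"
  shows "(\<Sum>y\<in>C. (y $ a)^(m+2)) * (real m + 48) = (\<Sum>y\<in>C. (y $ a)^m) * (real m + 1)"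
proof -
  define T where "T k = (\<Sum>y\<in>C. (y $ a)^k)" for k
  have fin: "finite C" and sph: "C \<subseteq> sphere 0 1" using des unfolding spherical_design_def by auto
  have key: "(real m + 1) * (\<Sum>y\<in>C. (y$a)^m * (y$b)^2) = T (m+2)" if ba: "b \<noteq> a" for b
  proof -
    define g where "g \<theta> = (\<Sum>y\<in>C. (cos \<theta> * y$a + sin \<theta> * y$b)^(Suc (Suc m)))" for \<theta>
    have gc: "g \<theta> = T (m+2)" for \<theta>
    proof -
      define u where "u = cos \<theta> *\<^sub>R axis a (1::real) + sin \<theta> *\<^sub>R axis b 1"
      have uy: "u \<bullet> y = cos \<theta> * y$a + sin \<theta> * y$b" for y :: "real^'n"
        by (simp add: u_def inner_add_left axis_inner)
      have "u $ a = cos \<theta>" "u $ b = sin \<theta>" using ba by (auto simp: u_def axis_def)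
      then have "u \<bullet> u = 1"
        using uy[of u] by (simp add: power2_eq_square[symmetric])
      then have "norm u = norm (axis a (1::real))" by (simp add: norm_eq_1)
      from T_inv[OF card des this, of "m+2"] m show ?thesis
        by (simp add: g_def T_def uy axis_inner)
    qed
    define g1 where "g1 \<theta> = (\<Sum>y\<in>C. real (Suc (Suc m)) * (cos \<theta> * y$a + sin \<theta> * y$b)^(Suc m) * (cos \<theta> * y$b - sin \<theta> * y$a))" for \<theta>
    have "(g has_real_derivative g1 \<theta>) (at \<theta>)" for \<theta>
      unfolding g_def g1_def by (rule DERIV_sum) (rule d1)
    then have g10: "g1 \<theta> = 0" for \<theta> using deriv_zero_const[of g "T (m+2)"] gc by blast
    have "(g1 has_real_derivative (\<Sum>y\<in>C. real (Suc (Suc m)) * (real (Suc m) * (y$a)^m * (y$b) * (y$b) - (y$a) ^ Suc m * (y$a)))) (at 0)"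
      unfolding g1_def by (rule DERIV_sum) (rule d2)
    then have "(\<Sum>y\<in>C. real (Suc (Suc m)) * (real (Suc m) * (y$a)^m * (y$b) * (y$b) - (y$a) ^ Suc m * (y$a))) = 0"
      using deriv_zero_const[of g1 0] g10 by blast
    then have "real (Suc (Suc m)) * ((real m + 1) * (\<Sum>y\<in>C. (y$a)^m * (y$b)^2) - T (m+2)) = 0"
      by (simp add: T_def sum_distrib_left sum_subtractf algebra_simps power2_eq_square)
    then show ?thesis by simp
  qed
  have sq1: "(\<Sum>b\<in>UNIV. (y$b)^2) = 1" if "y \<in> C" for y
  proof -
    have "norm y = 1" using sph that by auto
    then have "y \<bullet> y = 1" by (simp add: norm_eq_1)
    then show ?thesis by (simp add: inner_vec_def power2_eq_square)
  qed
  have "T m = (\<Sum>y\<in>C. (y$a)^m * (\<Sum>b\<in>UNIV. (y$b)^2))"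
    by (simp add: T_def sq1)
  also have "\<dots> = (\<Sum>b\<in>UNIV. \<Sum>y\<in>C. (y$a)^m * (y$b)^2)"
    by (simp add: sum_distrib_left sum.swap[of _ UNIV])
  also have "\<dots> = (\<Sum>y\<in>C. (y$a)^m * (y$a)^2) + (\<Sum>b\<in>UNIV-{a}. \<Sum>y\<in>C. (y$a)^m * (y$b)^2)"
    by (simp add: sum.remove[of UNIV a])
  also have "(\<Sum>y\<in>C. (y$a)^m * (y$a)^2) = T (m+2)" by (simp add: T_def power_add power2_eq_square mult_ac)
  also have "(\<Sum>b\<in>UNIV-{a}. \<Sum>y\<in>C. (y$a)^m * (y$b)^2) = (\<Sum>b\<in>UNIV-{a}. T (m+2) / (real m + 1))"
    by (rule sum.cong) (use key in \<open>auto simp: field_simps\<close>)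
  also have "\<dots> = 47 * (T (m+2) / (real m + 1))"
    using card by (simp add: card_Diff_singleton)
  finally have "T m * (real m + 1) = T (m+2) * (real m + 1) + 47 * T (m+2)"
    by (simp add: field_simps)
  then show ?thesis by (simp add: T_def algebra_simps)
qed

definition Mf :: "nat \<Rightarrow> real" where
  "Mf k = (if k = 0 then 1 else if k = 2 then 1/48 else if k = 4 then 1/800 else if k = 6 then 1/8320
     else if k = 8 then 7/449280 else if k = 10 then 1/399360 else 0)"

lemma moments:
  fixes C :: "(real^'n::finite) set"
  assumes card: "CARD('n) = 48" and des: "spherical_design 11 C" and x: "x \<in> C" and k: "k \<le> 11"
  shows "(\<Sum>y\<in>C. (x \<bullet> y)^k) = real (card C) * Mf k"
proof -
  fix a :: 'n
  define T where "T k = (\<Sum>y\<in>C. (y $ a)^k)" for k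
  have "norm x = 1" using des x unfolding spherical_design_def by auto
  then have "norm x = norm (axis a (1::real))" by simp
  from T_inv[OF card des this k] have xT: "(\<Sum>y\<in>C. (x \<bullet> y)^k) = T k"
    by (simp add: T_def axis_inner)
  have odd0: "T j = 0" if "odd j" "j \<le> 11" for j
  proof -
    have "norm (axis a (1::real)) = norm (- axis a (1::real))" by simp
    from T_inv[OF card des this that(2)] have "T j = (\<Sum>y\<in>C. (- (y $ a))^j)"
      by (simp add: T_def axis_inner)
    also have "\<dots> = - T j" using that(1) by (simp add: T_def power_minus_odd sum_negf)
    finally show ?thesis by simp
  qed
  have rec: "T (m+2) * (real m + 48) = T m * (real m + 1)" if "m + 2 \<le> 11" for m
    using moments_rec[OF card des that, of a] by (simp add: T_def)
  have T0: "T 0 = real (card C)" by (simp add: T_def)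
  have "T (0+2) * (real 0 + 48) = T 0 * (real 0 + 1)" by (rule rec) simp
  then have T2: "T 2 = real (card C) / 48" using T0 by (simp add: numeral_2_eq_2)
  have T4: "T 4 = real (card C) / 800" using rec[of 2] T2 by simp
  have T6: "T 6 = real (card C) / 8320" using rec[of 4] T4 by simp
  have T8: "T 8 = real (card C) * 7 / 449280" using rec[of 6] T6 by simp
  have T10: "T 10 = real (card C) / 399360" using rec[of 8] T8 by simp
  have "k \<in> {0,1,2,3,4,5,6,7,8,9,10,11}" using k by simp presburger
  then have "T k = real (card C) * Mf k"
    by (auto simp: Mf_def T0 T2 T4 T6 T8 T10 odd0)
  with xT show ?thesis by simp
qed



fun pe :: "real list \<Rightarrow> real \<Rightarrow> real" where
  "pe [] t = 0" | "pe (c # cs) t = c + t * pe cs t"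

fun mo :: "real list \<Rightarrow> nat \<Rightarrow> real" where
  "mo [] j = 0" | "mo (c # cs) j = c * Mf j + mo cs (j + 1)"

lemma pe_sum_gen:
  fixes C :: "(real^'n::finite) set"
  assumes card: "CARD('n) = 48" and des: "spherical_design 11 C" and x: "x \<in> C"
  shows "j + length cs \<le> 12 \<Longrightarrow> (\<Sum>y\<in>C. (x \<bullet> y)^j * pe cs (x \<bullet> y)) = real (card C) * mo cs j"
proof (induction cs arbitrary: j)
  case Nil then show ?case by simp
next
  case (Cons c cs)
  have IH: "(\<Sum>y\<in>C. (x \<bullet> y)^(j+1) * pe cs (x \<bullet> y)) = real (card C) * mo cs (j+1)"
    by (rule Cons.IH) (use Cons.prems in simp)
  have M: "(\<Sum>y\<in>C. (x \<bullet> y)^j) = real (card C) * Mf j"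
    using moments[OF card des x, of j] Cons.prems by simp
  have "(\<Sum>y\<in>C. (x \<bullet> y)^j * pe (c # cs) (x \<bullet> y))
      = c * (\<Sum>y\<in>C. (x \<bullet> y)^j) + (\<Sum>y\<in>C. (x \<bullet> y)^(j+1) * pe cs (x \<bullet> y))"
    by (simp add: sum.distrib sum_distrib_left algebra_simps)
  also have "\<dots> = c * (real (card C) * Mf j) + real (card C) * mo cs (j+1)" by (simp only: IH M)
  also have "\<dots> = real (card C) * mo (c # cs) j" by (simp add: algebra_simps)
  finally show ?case .
qed

lemma pe_sum:
  fixes C :: "(real^'n::finite) set"
  assumes "CARD('n) = 48" "spherical_design 11 C" "x \<in> C" "length cs \<le> 12"
  shows "(\<Sum>y\<in>C. pe cs (x \<bullet> y)) = real (card C) * mo cs 0"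
  using pe_sum_gen[OF assms(1-3), of 0 cs] assms(4) by simp

definition ff :: "real \<Rightarrow> real" where
  "ff t = (t+1)*(t^2-1/4)*(t^2-1/9)*(t^2-1/36)^2*t^2"

definition fc :: "real list" where
  "fc = [0,0,1/46656,1/46656,-85/46656,-85/46656,7/144,7/144,-5/12,-5/12,1,1]"

lemma pe_fc: "pe fc t = ff t"
  by (simp add: fc_def ff_def field_simps power2_eq_square)

lemma mo_fc: "mo fc 0 = 7/291133440"
  by (simp add: fc_def Mf_def)

lemma ff1: "ff 1 = 52416000 * (7/291133440)"
  by (simp add: ff_def power2_eq_square)

lemma ff_nonneg:
  assumes "-1 \<le> t" "t \<notin> {-1/2<..<-1/3} \<union> {1/3<..<1/2}"
  shows "ff t \<ge> 0"
proof -
  have "(t^2-1/4)*(t^2-1/9) \<ge> 0"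
  proof (cases "\<bar>t\<bar> \<le> 1/3")
    case True
    then have "t^2 \<le> (1/3)^2" by (metis abs_ge_zero power_mono power2_abs)
    then have "t^2 - 1/4 \<le> 0" "t^2 - 1/9 \<le> 0" by (simp_all add: power2_eq_square)
    then show ?thesis by (simp add: mult_nonpos_nonpos)
  next
    case False
    then have "\<bar>t\<bar> \<ge> 1/2" using assms(2) by auto
    then have "(1/2)^2 \<le> t^2" by (metis power_mono power2_abs zero_le_divide_1_iff zero_le_numeral)
    then have "t^2 - 1/4 \<ge> 0" "t^2 - 1/9 \<ge> 0" by (simp_all add: power2_eq_square)
    then show ?thesis by simp
  qed
  moreover have "t + 1 \<ge> 0" using assms(1) by simp
  ultimately show ?thesis unfolding ff_def
    by (metis (no_types, lifting) mult.assoc mult_nonneg_nonneg zero_le_power2)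
qed

lemma sq_eq: "t^2 - a^2 = 0 \<Longrightarrow> t = a \<or> t = - (a::real)"
  by (metis eq_iff_diff_eq_0 power2_eq_iff)

lemma ff_zero:
  assumes "ff t = 0"
  shows "t \<in> {-1, 1/2, -1/2, 1/3, -1/3, 1/6, -1/6, 0}"
proof -
  have "t + 1 = 0 \<or> t^2 - (1/2)^2 = 0 \<or> t^2 - (1/3)^2 = 0 \<or> t^2 - (1/6)^2 = 0 \<or> t = 0"
    using assms by (simp add: ff_def power2_eq_square)
  then show ?thesis using sq_eq[of t "1/2"] sq_eq[of t "1/3"] sq_eq[of t "1/6"] by auto
qed



definition "RR = {-1, 1/2, -1/2, 1/3, -1/3, 1/6, -1/6, 0::real}"

definition "lm1 = [0, 1/840, 0, -7/120, 0, 3/5, 0, -54/35::real]"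
definition "lp2 = [0, 1/15, 1/5, -43/15, -9, 78/5, 324/5, 216/5::real]"
definition "lm2 = [0, -1/5, 1/5, 47/5, -9, -414/5, 324/5, 648/5::real]"
definition "lp3 = [0, -27/40, -27/10, 999/40, 108, -81/5, -1944/5, -1458/5::real]"
definition "lm3 = [0, 27/20, -27/10, -1161/20, 108, 1782/5, -1944/5, -2916/5::real]"
definition "lp6 = [0, 27/7, 27, -27, -351, -162, 972, 5832/7::real]"
definition "lm6 = [0, -27/5, 27, 513/5, -351, -3078/5, 972, 5832/5::real]"
definition "l0 = [1, 1, -49, -49, 504, 504, -1296, -1296::real]"

lemma lm1: "\<forall>t\<in>RR. pe lm1 t = (if t = -1 then 1 else 0)" "52416000 * mo lm1 0 - pe lm1 1 = 1"
  by (simp_all add: RR_def lm1_def Mf_def)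
lemma lp2: "\<forall>t\<in>RR. pe lp2 t = (if t = 1/2 then 1 else 0)" "52416000 * mo lp2 0 - pe lp2 1 = 36848"
  by (simp_all add: RR_def lp2_def Mf_def)
lemma lm2: "\<forall>t\<in>RR. pe lm2 t = (if t = -1/2 then 1 else 0)" "52416000 * mo lm2 0 - pe lm2 1 = 36848"
  by (simp_all add: RR_def lm2_def Mf_def)
lemma lp3: "\<forall>t\<in>RR. pe lp3 t = (if t = 1/3 then 1 else 0)" "52416000 * mo lp3 0 - pe lp3 1 = 1678887"
  by (simp_all add: RR_def lp3_def Mf_def)
lemma lm3: "\<forall>t\<in>RR. pe lm3 t = (if t = -1/3 then 1 else 0)" "52416000 * mo lm3 0 - pe lm3 1 = 1678887"
  by (simp_all add: RR_def lm3_def Mf_def)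
lemma lp6: "\<forall>t\<in>RR. pe lp6 t = (if t = 1/6 then 1 else 0)" "52416000 * mo lp6 0 - pe lp6 1 = 12608784"
  by (simp_all add: RR_def lp6_def Mf_def)
lemma lm6: "\<forall>t\<in>RR. pe lm6 t = (if t = -1/6 then 1 else 0)" "52416000 * mo lm6 0 - pe lm6 1 = 12608784"
  by (simp_all add: RR_def lm6_def Mf_def)
lemma l0: "\<forall>t\<in>RR. pe l0 t = (if t = 0 then 1 else 0)" "52416000 * mo l0 0 - pe l0 1 = 23766960"
  by (simp_all add: RR_def l0_def Mf_def)

lemma lens: "length lm1 \<le> 12" "length lp2 \<le> 12" "length lm2 \<le> 12" "length lp3 \<le> 12" "length lm3 \<le> 12" "length lp6 \<le> 12" "length lm6 \<le> 12" "length l0 \<le> 12"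
  by (simp_all add: lm1_def lp2_def lm2_def lp3_def lm3_def lp6_def lm6_def l0_def)
lemmas len_lm1 = lens(1)
lemmas len_lp2 = lens(2)
lemmas len_lm2 = lens(3)
lemmas len_lp3 = lens(4)
lemmas len_lm3 = lens(5)
lemmas len_lp6 = lens(6)
lemmas len_lm6 = lens(7)
lemmas len_l0 = lens(8)

lemma lagr:
  fixes C :: "(real^'n::finite) set"
  assumes fin: "finite C" and x: "x \<in> C" and xx: "x \<bullet> x = 1"
    and RC: "\<forall>y\<in>C-{x}. x \<bullet> y \<in> RR" and lc: "\<forall>t\<in>RR. pe lc t = (if t = t0 then 1 else 0)"
    and t0: "t0 \<noteq> 1"
  shows "(\<Sum>y\<in>C. pe lc (x \<bullet> y)) = pe lc 1 + real (card {y\<in>C. x \<bullet> y = t0})"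
proof -
  have "(\<Sum>y\<in>C. pe lc (x \<bullet> y)) = pe lc 1 + (\<Sum>y\<in>C-{x}. pe lc (x \<bullet> y))"
    using fin x xx by (simp add: sum.remove)
  also have "(\<Sum>y\<in>C-{x}. pe lc (x \<bullet> y)) = (\<Sum>y\<in>C-{x}. if x \<bullet> y = t0 then 1 else 0)"
    using RC lc by (intro sum.cong) auto
  also have "\<dots> = real (card {y\<in>C-{x}. x \<bullet> y = t0})"
    using fin by (simp add: sum.inter_filter[symmetric])
  also have "{y\<in>C-{x}. x \<bullet> y = t0} = {y\<in>C. x \<bullet> y = t0}"
    using xx t0 by auto
  finally show ?thesis .
qed

theorem theorem7:
  fixes C :: "(real^'n::finite) set"
  assumes "CARD('n) = 48"
    and "spherical_design 11 C"
    and "inner_products C \<subseteq> {-1..<1} - ({-1/2<..<-1/3} \<union> {1/3<..<1/2})"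
  shows "card C \<ge> 52416000 \<and>
    (card C = 52416000 \<longrightarrow>
      distance_invariant C \<and>
      (\<forall>x\<in>C. \<forall>t\<in>{-1..<1}. dist_count C t x =
          (if t = -1 then 1
           else if t = 1/2 \<or> t = -1/2 then 36848
           else if t = 1/3 \<or> t = -1/3 then 1678887
           else if t = 1/6 \<or> t = -1/6 then 12608784
           else if t = 0 then 23766960
           else 0)))"
proof -
  note card = assms(1) and des = assms(2)
  have fin: "finite C" and ne: "C \<noteq> {}" and sph: "C \<subseteq> sphere 0 1"
    using des unfolding spherical_design_def by auto
  have xx: "x \<bullet> x = 1" if "x \<in> C" for x
  proof -
    have "norm x = 1" using sph that by auto
    then show ?thesis by (simp add: norm_eq_1)
  qed
  have ip: "x \<bullet> y \<in> {-1..<1} - ({-1/2<..<-1/3} \<union> {1/3<..<1/2})" if "x \<in> C" "y \<in> C" "x \<noteq> y" for x y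
    using assms(3) that unfolding inner_products_def by blast
  define N where "N = card C"
  have key: "real N * (7/291133440) = ff 1 + (\<Sum>y\<in>C-{x}. ff (x \<bullet> y))" if x: "x \<in> C" for x
  proof -
    have "real N * (7/291133440) = (\<Sum>y\<in>C. pe fc (x \<bullet> y))"
    proof -
      have "length fc \<le> 12" by (simp add: fc_def)
      from pe_sum[OF card des x this] show ?thesis by (simp add: N_def mo_fc)
    qed
    also have "\<dots> = (\<Sum>y\<in>C. ff (x \<bullet> y))" by (simp add: pe_fc)
    also have "\<dots> = ff 1 + (\<Sum>y\<in>C-{x}. ff (x \<bullet> y))"
      using fin x xx[OF x] by (simp add: sum.remove)
    finally show ?thesis .
  qed
  have nonneg: "ff (x \<bullet> y) \<ge> 0" if "x \<in> C" "y \<in> C-{x}" for x y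
    using ip[of x y] that by (intro ff_nonneg) auto
  obtain x0 where x0: "x0 \<in> C" using ne by blast
  have "(\<Sum>y\<in>C-{x0}. ff (x0 \<bullet> y)) \<ge> 0"
    using nonneg[OF x0] by (intro sum_nonneg) blast
  then have "real N * (7/291133440) \<ge> ff 1"
    using key[OF x0] by linarith
  then have "real N \<ge> 52416000" by (simp add: ff1)
  then have bound: "N \<ge> 52416000" by simp
  have eqpart: "distance_invariant C \<and>
      (\<forall>x\<in>C. \<forall>t\<in>{-1..<1}. dist_count C t x =
          (if t = -1 then 1
           else if t = 1/2 \<or> t = -1/2 then 36848
           else if t = 1/3 \<or> t = -1/3 then 1678887
           else if t = 1/6 \<or> t = -1/6 then 12608784
           else if t = 0 then 23766960
           else 0))" if NE: "N = 52416000"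
  proof -
    have RC: "\<forall>y\<in>C-{x}. x \<bullet> y \<in> RR" if x: "x \<in> C" for x
    proof -
      have "(\<Sum>y\<in>C-{x}. ff (x \<bullet> y)) = 0" using key[OF x] NE by (simp add: ff1)
      then have "\<forall>y\<in>C-{x}. ff (x \<bullet> y) = 0"
        using sum_nonneg_eq_0_iff[of "C-{x}" "\<lambda>y. ff (x \<bullet> y)"] fin nonneg[OF x] by blast
      then show ?thesis using ff_zero unfolding RR_def by blast
    qed
    have cnt: "real (card {y\<in>C. x \<bullet> y = t0}) = 52416000 * mo lc 0 - pe lc 1"
      if x: "x \<in> C" and lc: "\<forall>t\<in>RR. pe lc t = (if t = t0 then 1 else 0)" and t0: "t0 \<noteq> 1"
        and len: "length lc \<le> 12" for x lc t0
      using lagr[OF fin x xx[OF x] RC[OF x] lc t0] pe_sum[OF card des x len] NE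
      by (simp add: N_def)
    have formula: "dist_count C t x =
          (if t = -1 then 1
           else if t = 1/2 \<or> t = -1/2 then 36848
           else if t = 1/3 \<or> t = -1/3 then 1678887
           else if t = 1/6 \<or> t = -1/6 then 12608784
           else if t = 0 then 23766960
           else 0)" if x: "x \<in> C" and t: "t \<in> {-1..<1}" for x t
    proof -
      have c: "real (dist_count C t0 x) = 52416000 * mo lc 0 - pe lc 1"
        if "\<forall>t\<in>RR. pe lc t = (if t = t0 then 1 else 0)" "t0 \<noteq> 1" "length lc \<le> 12" for lc t0
        using cnt[OF x that] by (simp add: dist_count_def)
      consider "t = -1" | "t = 1/2" | "t = -1/2" | "t = 1/3" | "t = -1/3" | "t = 1/6" | "t = -1/6"
        | "t = 0" | "t \<notin> RR" unfolding RR_def by blast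
      then show ?thesis
      proof cases
        case 1 show ?thesis unfolding 1 using c[OF lm1(1) _ len_lm1] lm1(2) by simp
      next
        case 2 show ?thesis unfolding 2 using c[OF lp2(1) _ len_lp2] lp2(2) by simp
      next
        case 3 show ?thesis unfolding 3 using c[OF lm2(1) _ len_lm2] lm2(2) by simp
      next
        case 4 show ?thesis unfolding 4 using c[OF lp3(1) _ len_lp3] lp3(2) by simp
      next
        case 5 show ?thesis unfolding 5 using c[OF lm3(1) _ len_lm3] lm3(2) by simp
      next
        case 6 show ?thesis unfolding 6 using c[OF lp6(1) _ len_lp6] lp6(2) by simp
      next
        case 7 show ?thesis unfolding 7 using c[OF lm6(1) _ len_lm6] lm6(2) by simp
      next
        case 8 show ?thesis unfolding 8 using c[OF l0(1) _ len_l0] l0(2) by simp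
      next
        case 9
        have "{y\<in>C. x \<bullet> y = t} = {}"
        proof (rule ccontr)
          assume "{y\<in>C. x \<bullet> y = t} \<noteq> {}"
          then obtain y where y: "y \<in> C" "x \<bullet> y = t" by blast
          show False
          proof (cases "y = x")
            case True then show False using y xx[OF x] t by simp
          next
            case False then show False using RC[OF x] y 9 by auto
          qed
        qed
        then have "dist_count C t x = 0" unfolding dist_count_def by (metis card.empty)
        moreover have "\<not> (t = -1 \<or> t = 1/2 \<or> t = -1/2 \<or> t = 1/3 \<or> t = -1/3 \<or> t = 1/6 \<or> t = -1/6 \<or> t = 0)"
          using 9 unfolding RR_def by auto
        ultimately show ?thesis by auto
      qed
    qed
    have "distance_invariant C"
      unfolding distance_invariant_def using formula by simp
    then show ?thesis using formula by blast
  qed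
  show ?thesis using bound eqpart by (simp add: N_def)
qed

end
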